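(* Let $(L,T,U,\bar e)$ be a feasible basis structure of an instance of the budget-constrained minimum cost flow problem, with node potentials $\pi,\mu$, and let $e$ be an entering edge (i.e. $e\in L$ with $d_e<0$, or $e\in U$ with $d_e>0$). Then the tuple $(L',T',U',\bar e')$ resulting from a simplex pivot with entering edge $e$ (and any choice of leaving edge) is again a feasible basis structure; in particular $b(C'(\bar e'))\ne 0$, where $C'(\bar e')$ is the cycle closed by $\bar e'$ with $T'$.
   Context: Problem: directed multigraph $G=(V,E)$, capacities $u_e\in\mathbb{N}_{\ge0}$, costs $c_e\in\mathbb{Z}$, usage fees $b_e\in\mathbb{N}_{\ge0}$, budget $B\in\mathbb{N}_{\ge0}$. A feasible flow is $x\in\mathbb{R}^E$ with flow conservation $\sum_{e\in\delta^-(v)}x_e=\sum_{e\in\delta^+(v)}x_e$ at every node and $0\le x\le u$; $c(x)=\sum_e c_ex_e$, $b(x)=\sum_e b_ex_e$; one minimizes $c(x)$ subject to $b(x)\le B$. Basis structure: tuple $(L,T,U,\bar e)$, $\bar e\in E$, $L,T,U$ a partition of $E\setminus\{\bar e\}$, $T$ a spanning tree of the underlying undirected graph. For $f\notin T$, $C(f)$ is the unique cycle in $T\cup\{f\}$ oriented along $f$, with forward edges $C^+(f)$ and backward edges $C^-(f)$; $b(C(f))=\sum_{C^+(f)}b-\sum_{C^-(f)}b$; $\chi(C)\in\{0,\pm1\}^E$ is $+1$ on $C^+$, $-1$ on $C^-$, $0$ elsewhere. It is required that $b(C(\bar e))\ne0$. The basic solution is the unique $x$ with flow conservation, $x=0$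 on $L$, $x=u$ on $U$, $b(x)=B$; the basis structure is feasible if $0\le x\le u$ (then $x$ is the basic feasible flow). Node potentials: for a fixed root $v_r$, $\pi,\mu:V\to\mathbb{R}$ are the unique functions with $\pi_{v_r}=\mu_{v_r}=0$ and $c^\pi_g:=c_g-\pi_v+\pi_w=0$, $b^\mu_g:=b_g-\mu_v+\mu_w=0$ for all $g=(v,w)\in T$ (reduced costs $c^\pi$, $b^\mu$ are defined this way for all edges). Define $d_g:=c^\pi_g-c^\pi_{\bar e}\, b^\mu_g/b^\mu_{\bar e}$. Simplex pivot: given feasible $(L,T,U,\bar e)$ with basic feasible flow $x$ and entering edge $e$, put $\sigma=1$ if $e\in L$, $\sigma=-1$ if $e\in U$, $\theta=\sigma(\chi(C(e))-\frac{b^\mu_e}{b^\mu_{\bar e}}\chi(C(\bar e)))$; for $f\in E$ let $\delta_f=-x_f/\theta_f$ if $\theta_f<0$, $(u_f-x_f)/\theta_f$ if $\theta_f>0$, $+\infty$ otherwise; $\delta=\min_f\delta_f$, $x'=x+\delta\theta$. A leaving edge is any $e'$ with $\delta_{e'}=\delta$ (so $x'_{e'}\in\{0,u_{e'}\}$). New tuple: if $e'=e$, move $e$ from its set ($L$ or $U$) to the other one; if $e'=\bar e$, set $T'=T$, $\bar e'=e$, remove $e$ from $L$ or $U$, and put $\bar e$ into $L'$ if $x'_{\bar e}=0$, into $U'$ otherwise; else remove $e$ from $L$ or $U$, put $e'$ into $L'$ if $x'_{e'}=0$ and into $U'$ otherwise, and set $T'=T\cup\{e\}\setminus\{e'\}$,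 $\bar e'=\bar e$ if this is a spanning tree, and otherwise $T'=T\cup\{\bar e\}\setminus\{e'\}$, $\bar e'=e$. *)

theory Defs
  imports Main "HOL-Library.Extended_Real"
begin

text \<open>A directed multigraph is given by abstract node and edge sets together with
  tail and head maps (parallel edges and loops are allowed).\<close>

record ('v, 'e) bmcf =
  nodes  :: "'v set"
  edges  :: "'e set"
  tail   :: "'e \<Rightarrow> 'v"
  head   :: "'e \<Rightarrow> 'v"
  cap    :: "'e \<Rightarrow> nat"
  cost   :: "'e \<Rightarrow> int"
  fee    :: "'e \<Rightarrow> nat"
  budget :: nat

definition wf_inst :: "('v, 'e, 'z) bmcf_scheme \<Rightarrow> bool" where
  "wf_inst I \<longleftrightarrow> finite (nodes I) \<and> finite (edges I) \<and>
     (\<forall>g\<in>edges I. tail I g \<in> nodes I \<and> head I g \<in> nodes I)"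

text \<open>A walk is a list of pairs (edge, direction); direction True means the edge is
  traversed from its tail to its head (forward), False means backward.\<close>

fun uwalk :: "('v, 'e, 'z) bmcf_scheme \<Rightarrow> 'e set \<Rightarrow> 'v \<Rightarrow> ('e \<times> bool) list \<Rightarrow> 'v \<Rightarrow> bool" where
  "uwalk I F v [] w \<longleftrightarrow> v = w"
| "uwalk I F v ((g, d) # p) w \<longleftrightarrow> g \<in> F \<and>
     (if d then tail I g = v \<and> uwalk I F (head I g) p w
           else head I g = v \<and> uwalk I F (tail I g) p w)"

fun uverts :: "('v, 'e, 'z) bmcf_scheme \<Rightarrow> 'v \<Rightarrow> ('e \<times> bool) list \<Rightarrow> 'v list" where
  "uverts I v [] = [v]"
| "uverts I v ((g, d) # p) = v # uverts I (if d then head I g else tail I g) p"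

text \<open>A cycle (starting and ending at v): nonempty closed walk with pairwise distinct
  edges and pairwise distinct vertices (apart from start = end). Loops are cycles.\<close>

definition ucycle_at :: "('v, 'e, 'z) bmcf_scheme \<Rightarrow> 'e set \<Rightarrow> 'v \<Rightarrow> ('e \<times> bool) list \<Rightarrow> bool" where
  "ucycle_at I F v p \<longleftrightarrow> p \<noteq> [] \<and> uwalk I F v p v \<and> distinct (map fst p) \<and>
     distinct (tl (uverts I v p))"

definition spanning_tree :: "('v, 'e, 'z) bmcf_scheme \<Rightarrow> 'e set \<Rightarrow> bool" where
  "spanning_tree I T \<longleftrightarrow> T \<subseteq> edges I \<and>
     (\<forall>v\<in>nodes I. \<forall>w\<in>nodes I. \<exists>p. uwalk I T v p w) \<and>
     \<not> (\<exists>v p. ucycle_at I T v p)"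

definition fcycle :: "('v, 'e, 'z) bmcf_scheme \<Rightarrow> 'e set \<Rightarrow> 'e \<Rightarrow> ('e \<times> bool) list" where
  "fcycle I T f = (THE p. ucycle_at I (insert f T) (tail I f) p \<and> hd p = (f, True))"

definition chi :: "('e \<times> bool) list \<Rightarrow> 'e \<Rightarrow> real" where
  "chi p g = (if (g, True) \<in> set p then 1 else if (g, False) \<in> set p then -1 else 0)"

definition bC :: "('v, 'e, 'z) bmcf_scheme \<Rightarrow> 'e set \<Rightarrow> 'e \<Rightarrow> real" where
  "bC I T f = (\<Sum>g\<in>edges I. real (fee I g) * chi (fcycle I T f) g)"

definition is_basic_sol :: "('v, 'e, 'z) bmcf_scheme \<Rightarrow> 'e set \<Rightarrow> 'e set \<Rightarrow> ('e \<Rightarrow> real) \<Rightarrow> bool" where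
  "is_basic_sol I L U x \<longleftrightarrow>
     (\<forall>v\<in>nodes I. (\<Sum>g\<in>{g\<in>edges I. head I g = v}. x g) = (\<Sum>g\<in>{g\<in>edges I. tail I g = v}. x g)) \<and>
     (\<forall>g\<in>L. x g = 0) \<and> (\<forall>g\<in>U. x g = real (cap I g)) \<and>
     (\<Sum>g\<in>edges I. real (fee I g) * x g) = real (budget I) \<and>
     (\<forall>g. g \<notin> edges I \<longrightarrow> x g = 0)"

text \<open>The basic solution (values outside the edge set are normalised to 0).\<close>

definition basic_sol :: "('v, 'e, 'z) bmcf_scheme \<Rightarrow> 'e set \<Rightarrow> 'e set \<Rightarrow> 'e \<Rightarrow> real" where
  "basic_sol I L U = (THE x. is_basic_sol I L U x)"

definition basis_structure :: "('v, 'e, 'z) bmcf_scheme \<Rightarrow> 'e set \<Rightarrow> 'e set \<Rightarrow> 'e set \<Rightarrow> 'e \<Rightarrow> bool" where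
  "basis_structure I L T U eb \<longleftrightarrow> eb \<in> edges I \<and>
     L \<union> T \<union> U = edges I - {eb} \<and> L \<inter> T = {} \<and> L \<inter> U = {} \<and> T \<inter> U = {} \<and>
     spanning_tree I T \<and> bC I T eb \<noteq> 0"

definition feasible_basis :: "('v, 'e, 'z) bmcf_scheme \<Rightarrow> 'e set \<Rightarrow> 'e set \<Rightarrow> 'e set \<Rightarrow> 'e \<Rightarrow> bool" where
  "feasible_basis I L T U eb \<longleftrightarrow> basis_structure I L T U eb \<and>
     (\<forall>g\<in>edges I. 0 \<le> basic_sol I L U g \<and> basic_sol I L U g \<le> real (cap I g))"

definition reduced :: "('v, 'e, 'z) bmcf_scheme \<Rightarrow> ('e \<Rightarrow> real) \<Rightarrow> ('v \<Rightarrow> real) \<Rightarrow> 'e \<Rightarrow> real" where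
  "reduced I w p g = w g - p (tail I g) + p (head I g)"

definition is_potential :: "('v, 'e, 'z) bmcf_scheme \<Rightarrow> 'e set \<Rightarrow> 'v \<Rightarrow> ('e \<Rightarrow> real) \<Rightarrow> ('v \<Rightarrow> real) \<Rightarrow> bool" where
  "is_potential I T r w p \<longleftrightarrow> p r = 0 \<and> (\<forall>g\<in>T. reduced I w p g = 0)"

abbreviation costr :: "('v, 'e, 'z) bmcf_scheme \<Rightarrow> 'e \<Rightarrow> real" where
  "costr I g \<equiv> real_of_int (cost I g)"

abbreviation feer :: "('v, 'e, 'z) bmcf_scheme \<Rightarrow> 'e \<Rightarrow> real" where
  "feer I g \<equiv> real (fee I g)"

definition dval :: "('v, 'e, 'z) bmcf_scheme \<Rightarrow> ('v \<Rightarrow> real) \<Rightarrow> ('v \<Rightarrow> real) \<Rightarrow> 'e \<Rightarrow> 'e \<Rightarrow> real" where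
  "dval I pp mu eb g = reduced I (costr I) pp g
      - reduced I (costr I) pp eb * reduced I (feer I) mu g / reduced I (feer I) mu eb"

definition pv_sigma :: "'e set \<Rightarrow> 'e \<Rightarrow> real" where
  "pv_sigma L e = (if e \<in> L then 1 else -1)"

definition pv_theta :: "('v, 'e, 'z) bmcf_scheme \<Rightarrow> 'e set \<Rightarrow> 'e set \<Rightarrow> 'e \<Rightarrow> ('v \<Rightarrow> real) \<Rightarrow> 'e \<Rightarrow> 'e \<Rightarrow> real" where
  "pv_theta I L T eb mu e f = pv_sigma L e *
     (chi (fcycle I T e) f - reduced I (feer I) mu e / reduced I (feer I) mu eb * chi (fcycle I T eb) f)"

definition pv_deltaf :: "('v, 'e, 'z) bmcf_scheme \<Rightarrow> ('e \<Rightarrow> real) \<Rightarrow> ('e \<Rightarrow> real) \<Rightarrow> 'e \<Rightarrow> ereal" where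
  "pv_deltaf I x th f = (if th f < 0 then ereal (- x f / th f)
      else if th f > 0 then ereal ((real (cap I f) - x f) / th f) else \<infinity>)"

definition pv_delta :: "('v, 'e, 'z) bmcf_scheme \<Rightarrow> ('e \<Rightarrow> real) \<Rightarrow> ('e \<Rightarrow> real) \<Rightarrow> ereal" where
  "pv_delta I x th = Min (pv_deltaf I x th ` edges I)"

definition is_leaving :: "('v, 'e, 'z) bmcf_scheme \<Rightarrow> 'e set \<Rightarrow> 'e set \<Rightarrow> 'e set \<Rightarrow> 'e \<Rightarrow> ('v \<Rightarrow> real) \<Rightarrow> 'e \<Rightarrow> 'e \<Rightarrow> bool" where
  "is_leaving I L T U eb mu e e' \<longleftrightarrow>
     (let x = basic_sol I L U; th = pv_theta I L T eb mu e
      in e' \<in> edges I \<and> pv_deltaf I x th e' = pv_delta I x th)"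

definition pv_newflow :: "('v, 'e, 'z) bmcf_scheme \<Rightarrow> 'e set \<Rightarrow> 'e set \<Rightarrow> 'e set \<Rightarrow> 'e \<Rightarrow> ('v \<Rightarrow> real) \<Rightarrow> 'e \<Rightarrow> 'e \<Rightarrow> real" where
  "pv_newflow I L T U eb mu e =
     (let x = basic_sol I L U; th = pv_theta I L T eb mu e
      in (\<lambda>g. x g + real_of_ereal (pv_delta I x th) * th g))"

definition pivot_tuple :: "('v, 'e, 'z) bmcf_scheme \<Rightarrow> 'e set \<Rightarrow> 'e set \<Rightarrow> 'e set \<Rightarrow> 'e \<Rightarrow> ('v \<Rightarrow> real) \<Rightarrow> 'e \<Rightarrow> 'e
     \<Rightarrow> 'e set \<times> 'e set \<times> 'e set \<times> 'e" where
  "pivot_tuple I L T U eb mu e e' =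
    (let x' = pv_newflow I L T U eb mu e; L0 = L - {e}; U0 = U - {e} in
     if e' = e then
       (if e \<in> L then (L - {e}, T, insert e U, eb) else (insert e L, T, U - {e}, eb))
     else if e' = eb then
       (if x' eb = 0 then (insert eb L0, T, U0, e) else (L0, T, insert eb U0, e))
     else
       (let L1 = (if x' e' = 0 then insert e' L0 else L0);
            U1 = (if x' e' = 0 then U0 else insert e' U0)
        in if spanning_tree I ((T \<union> {e}) - {e'})
           then (L1, (T \<union> {e}) - {e'}, U1, eb)
           else (L1, (T \<union> {eb}) - {e'}, U1, e)))"

end

theory Submission
  imports Defs
begin

lemma uwalk_mono: "uwalk I F v p w \<Longrightarrow> F \<subseteq> F' \<Longrightarrow> uwalk I F' v p w"
  by (induction I F v p w rule: uwalk.induct) (auto split: if_splits)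

lemma uwalk_edges: "uwalk I F v p w \<Longrightarrow> fst ` set p \<subseteq> F"
  by (induction I F v p w rule: uwalk.induct) (auto split: if_splits)

lemma uwalk_append: "uwalk I F v (p @ q) w \<longleftrightarrow> (\<exists>u. uwalk I F v p u \<and> uwalk I F u q w)"
proof (induction p arbitrary: v)
  case Nil then show ?case by simp
next
  case (Cons a p) then show ?case by (cases a) auto
qed

lemma uverts_length[simp]: "length (uverts I v p) = Suc (length p)"
  by (induction I v p rule: uverts.induct) auto

lemma uverts_hd[simp]: "uverts I v p ! 0 = v"
  by (cases p) auto

lemma uwalk_last: "uwalk I F v p w \<Longrightarrow> uverts I v p ! length p = w"
  by (induction I F v p w rule: uwalk.induct) (auto split: if_splits)

lemma uverts_take: "i \<le> length p \<Longrightarrow> uverts I v (take i p) = take (Suc i) (uverts I v p)"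
proof (induction p arbitrary: v i)
  case Nil then show ?case by simp
next
  case (Cons a p) then show ?case by (cases a; cases i) auto
qed

lemma uwalk_take_drop:
  "uwalk I F v p w \<Longrightarrow> i \<le> length p \<Longrightarrow>
    uwalk I F v (take i p) (uverts I v p ! i) \<and> uwalk I F (uverts I v p ! i) (drop i p) w"
proof (induction p arbitrary: v i)
  case Nil then show ?case by simp
next
  case (Cons a p)
  obtain g d where a: "a = (g,d)" by force
  show ?case
  proof (cases i)
    case 0 then show ?thesis using Cons by simp
  next
    case (Suc j)
    then show ?thesis using Cons.prems Cons.IH[of _ j] a by (auto split: if_splits)
  qed
qed

lemma uwalk_nth:
  "uwalk I F v p w \<Longrightarrow> k < length p \<Longrightarrow> p ! k = (g, d) \<Longrightarrow>
    g \<in> F \<and> (if d then tail I g = uverts I v p ! k \<and> head I g = uverts I v p ! Suc k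
             else head I g = uverts I v p ! k \<and> tail I g = uverts I v p ! Suc k)"
proof (induction p arbitrary: v k)
  case Nil then show ?case by simp
next
  case (Cons a p)
  obtain h e where a: "a = (h,e)" by force
  show ?case
  proof (cases k)
    case 0 then show ?thesis using Cons.prems a by (cases p) (auto split: if_splits)
  next
    case (Suc j)
    then show ?thesis using Cons.prems Cons.IH[of _ j] a by (auto split: if_splits)
  qed
qed

lemma uwalk_nth_ends:
  assumes "uwalk I F v p w" "k < length p"
  shows "fst (p ! k) \<in> F \<and> {tail I (fst (p!k)), head I (fst (p!k))} = {uverts I v p ! k, uverts I v p ! Suc k}"
proof -
  obtain g d where "p ! k = (g,d)" by force
  then show ?thesis using uwalk_nth[OF assms] by (auto split: if_splits)
qed

lemma path_distinct_edges:
  assumes w: "uwalk I F v p w" and dv: "distinct (uverts I v p)"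
  shows "distinct (map fst p)"
proof -
  have "fst (p!j) \<noteq> fst (p!k)" if jk: "j < k" "k < length p" for j k
  proof
    assume eq: "fst (p!j) = fst (p!k)"
    have "uverts I v p ! j \<in> {uverts I v p ! k, uverts I v p ! Suc k}"
      using uwalk_nth_ends[OF w, of j] uwalk_nth_ends[OF w, of k] jk eq by auto
    moreover have "uverts I v p ! j \<noteq> uverts I v p ! k" "uverts I v p ! j \<noteq> uverts I v p ! Suc k"
      using dv jk by (simp_all add: nth_eq_iff_index_eq)
    ultimately show False by auto
  qed
  then show ?thesis
    by (auto simp: distinct_conv_nth) (metis linorder_neqE_nat)
qed

lemma shortest_walk:
  "uwalk I F v p w \<Longrightarrow> \<exists>q. uwalk I F v q w \<and> distinct (uverts I v q)"
proof (induction "length p" arbitrary: p rule: less_induct)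
  case less
  show ?case
  proof (cases "distinct (uverts I v p)")
    case True then show ?thesis using less.prems by blast
  next
    case False
    then obtain i j where ij: "i < j" "j \<le> length p" "uverts I v p ! i = uverts I v p ! j"
      by (auto simp: distinct_conv_nth) (metis less_Suc_eq_le linorder_neqE_nat)
    have t: "uwalk I F v (take i p) (uverts I v p ! i)"
      using uwalk_take_drop[OF less.prems, of i] ij by simp
    have d: "uwalk I F (uverts I v p ! j) (drop j p) w"
      using uwalk_take_drop[OF less.prems, of j] ij by simp
    have "uwalk I F v (take i p @ drop j p) w" using t d ij(3) uwalk_append by metis
    moreover have "length (take i p @ drop j p) < length p" using ij by simp
    ultimately show ?thesis using less.hyps by blast
  qed
qed

definition rwalk :: "('e \<times> bool) list \<Rightarrow> ('e \<times> bool) list" where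
  "rwalk p = rev (map (\<lambda>(g,d). (g, \<not> d)) p)"

lemma uwalk_rev: "uwalk I F v p w \<Longrightarrow> uwalk I F w (rwalk p) v"
proof (induction p arbitrary: v)
  case Nil then show ?case by (simp add: rwalk_def)
next
  case (Cons a p)
  obtain g d where a: "a = (g,d)" by force
  show ?case using Cons a by (auto simp: rwalk_def uwalk_append split: if_splits)
qed

lemma uwalk_reroute:
  assumes "uwalk I F v p w"
    and "\<And>g. g \<in> F \<Longrightarrow> g \<notin> F' \<Longrightarrow> \<exists>q. uwalk I F' (tail I g) q (head I g)"
  shows "\<exists>q. uwalk I F' v q w"
  using assms(1)
proof (induction p arbitrary: v)
  case Nil then show ?case by (metis uwalk.simps(1))
next
  case (Cons a p)
  obtain g d where a: "a = (g,d)" by force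
  have gF: "g \<in> F" using Cons.prems a by simp
  have bridge: "\<exists>q. uwalk I F' (tail I g) q (head I g)" "\<exists>q. uwalk I F' (head I g) q (tail I g)"
  proof -
    show "\<exists>q. uwalk I F' (tail I g) q (head I g)"
    proof (cases "g \<in> F'")
      case True then have "uwalk I F' (tail I g) [(g,True)] (head I g)" by simp
      then show ?thesis by blast
    next
      case False then show ?thesis using assms(2) gF by blast
    qed
    then obtain q where "uwalk I F' (tail I g) q (head I g)" by blast
    then have "uwalk I F' (head I g) (rwalk q) (tail I g)" by (rule uwalk_rev)
    then show "\<exists>q. uwalk I F' (head I g) q (tail I g)" by blast
  qed
  show ?case
  proof (cases d)
    case True
    then have "tail I g = v" "uwalk I F (head I g) p w" using Cons.prems a by auto
    then show ?thesis using Cons.IH bridge uwalk_append by metis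
  next
    case False
    then have "head I g = v" "uwalk I F (tail I g) p w" using Cons.prems a by auto
    then show ?thesis using Cons.IH bridge uwalk_append by metis
  qed
qed

definition circ :: "('v, 'e, 'z) bmcf_scheme \<Rightarrow> ('e \<Rightarrow> real) \<Rightarrow> bool" where
  "circ I z \<longleftrightarrow> (\<forall>v\<in>nodes I. (\<Sum>g\<in>{g\<in>edges I. head I g = v}. z g) = (\<Sum>g\<in>{g\<in>edges I. tail I g = v}. z g))"

lemma chi_Nil[simp]: "chi [] g = 0" by (simp add: chi_def)

lemma chi_zero: "h \<notin> fst ` set p \<Longrightarrow> chi p h = 0"
  by (force simp: chi_def image_iff)

lemma chi_Cons: "g \<notin> fst ` set p \<Longrightarrow>
   chi ((g,d)#p) h = chi p h + (if h = g then (if d then 1 else -1) else 0)"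
  using chi_zero[of g p] by (auto simp: chi_def image_iff)

lemma chi_set:
  assumes "distinct (map fst p)"
  shows "((h,True) \<in> set p \<longleftrightarrow> chi p h = 1) \<and> ((h,False) \<in> set p \<longleftrightarrow> chi p h = -1)"
proof -
  have "\<not> ((h,True) \<in> set p \<and> (h,False) \<in> set p)"
  proof
    assume a: "(h,True) \<in> set p \<and> (h,False) \<in> set p"
    then obtain i j where "i < length p" "j < length p" "p!i = (h,True)" "p!j = (h,False)"
      by (metis in_set_conv_nth)
    moreover then have "i \<noteq> j" by auto
    ultimately show False using assms by (simp add: distinct_conv_nth) (metis fst_conv)
  qed
  then show ?thesis by (auto simp: chi_def)
qed

lemma chi_nonzero: "h \<in> fst ` set p \<Longrightarrow> chi p h \<noteq> 0"
  by (auto simp: chi_def) (metis (full_types))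

lemma walk_net:
  assumes fin: "finite (edges I)" and F: "F \<subseteq> edges I"
  shows "uwalk I F v p w \<Longrightarrow> distinct (map fst p) \<Longrightarrow>
    (\<Sum>g\<in>{g\<in>edges I. head I g = x}. chi p g) - (\<Sum>g\<in>{g\<in>edges I. tail I g = x}. chi p g)
     = (if x = w then 1 else 0) - (if x = v then 1 else 0)"
proof (induction p arbitrary: v)
  case Nil then show ?case by simp
next
  case (Cons a p)
  obtain g d where a: "a = (g,d)" by force
  have gE: "g \<in> edges I" using Cons.prems a F by auto
  have gp: "g \<notin> fst ` set p" "distinct (map fst p)" using Cons.prems a by auto
  let ?c = "(if d then 1 else -1) :: real"
  have ch: "chi (a#p) h = chi p h + (if h = g then ?c else 0)" for h
    using chi_Cons[OF gp(1)] a by simp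
  have s1: "(\<Sum>h\<in>{h\<in>edges I. head I h = x}. chi (a#p) h) =
     (\<Sum>h\<in>{h\<in>edges I. head I h = x}. chi p h) + (if head I g = x then ?c else 0)"
    using fin gE by (simp add: ch sum.distrib sum.delta)
  have s2: "(\<Sum>h\<in>{h\<in>edges I. tail I h = x}. chi (a#p) h) =
     (\<Sum>h\<in>{h\<in>edges I. tail I h = x}. chi p h) + (if tail I g = x then ?c else 0)"
    using fin gE by (simp add: ch sum.distrib sum.delta)
  show ?case
  proof (cases d)
    case True
    then have "tail I g = v" "uwalk I F (head I g) p w" using Cons.prems a by auto
    then have "(\<Sum>g\<in>{g\<in>edges I. head I g = x}. chi p g) - (\<Sum>g\<in>{g\<in>edges I. tail I g = x}. chi p g)
     = (if x = w then 1 else 0) - (if x = head I g then 1 else 0)" using Cons.IH[OF _ gp(2)] by blast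
    then show ?thesis using s1 s2 True \<open>tail I g = v\<close> by auto
  next
    case False
    then have "head I g = v" "uwalk I F (tail I g) p w" using Cons.prems a by auto
    then have "(\<Sum>g\<in>{g\<in>edges I. head I g = x}. chi p g) - (\<Sum>g\<in>{g\<in>edges I. tail I g = x}. chi p g)
     = (if x = w then 1 else 0) - (if x = tail I g then 1 else 0)" using Cons.IH[OF _ gp(2)] by blast
    then show ?thesis using s1 s2 False \<open>head I g = v\<close> by auto
  qed
qed

lemma cycle_circ:
  assumes "finite (edges I)" "F \<subseteq> edges I" "ucycle_at I F v p"
  shows "circ I (chi p)"
  using walk_net[OF assms(1,2), of v p v] assms(3) unfolding ucycle_at_def circ_def by auto

lemma circ_diff: "circ I z \<Longrightarrow> circ I y \<Longrightarrow> circ I (\<lambda>g. z g - a * y g)"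
  by (simp add: circ_def sum_subtractf sum_distrib_left[symmetric])

lemma circ_add: "circ I z \<Longrightarrow> circ I y \<Longrightarrow> circ I (\<lambda>g. z g + a * y g)"
  by (simp add: circ_def sum.distrib sum_distrib_left[symmetric])

lemma uwalk_nodes:
  assumes "wf_inst I" "F \<subseteq> edges I"
  shows "uwalk I F v p w \<Longrightarrow> v \<in> nodes I \<Longrightarrow> set (uverts I v p) \<subseteq> nodes I"
  using assms
proof (induction I F v p w rule: uwalk.induct)
  case (1 I F v w) then show ?case by simp
next
  case (2 I' F' v g d p w)
  have "tail I' g \<in> nodes I' \<and> head I' g \<in> nodes I'" using 2 by (auto simp: wf_inst_def)
  then show ?case using 2 by (auto split: if_splits)
qed

lemma find_cycle:
  assumes wf: "wf_inst I" and SE: "S \<subseteq> edges I"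
    and noloop: "\<And>g. g \<in> S \<Longrightarrow> tail I g \<noteq> head I g"
    and deg: "\<And>g v. g \<in> S \<Longrightarrow> tail I g = v \<or> head I g = v \<Longrightarrow> \<exists>h\<in>S. h \<noteq> g \<and> (tail I h = v \<or> head I h = v)"
  shows "uwalk I S v P w \<Longrightarrow> P \<noteq> [] \<Longrightarrow> distinct (uverts I v P) \<Longrightarrow> \<exists>y C. ucycle_at I S y C"
proof (induction "card (nodes I) - length P" arbitrary: v P rule: less_induct)
  case less
  have fin: "finite (nodes I)" using wf by (simp add: wf_inst_def)
  obtain g d P' where P: "P = (g,d) # P'" using less.prems(2) by (metis list.exhaust prod.exhaust)
  have gS: "g \<in> S" using less.prems(1) P by simp
  have vinc: "tail I g = v \<or> head I g = v" using less.prems(1) P by (auto split: if_splits)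
  have vN: "v \<in> nodes I" using vinc gS SE wf by (auto simp: wf_inst_def)
  have VN: "set (uverts I v P) \<subseteq> nodes I" using uwalk_nodes[OF wf SE less.prems(1) vN] .
  have lenP: "Suc (length P) \<le> card (nodes I)"
    using card_mono[OF fin VN] distinct_card[OF less.prems(3)] by simp
  obtain h where hS: "h \<in> S" and hg: "h \<noteq> g" and hinc: "tail I h = v \<or> head I h = v"
    using deg[OF gS vinc] by blast
  define d' where "d' = (head I h = v)"
  define y where "y = (if d' then tail I h else head I h)"
  have hw: "uwalk I S y [(h,d')] v" using hS hinc by (auto simp: d'_def y_def)
  have dfst: "distinct (map fst P)" using path_distinct_edges[OF less.prems(1,3)] .
  show ?case
  proof (cases "y \<in> set (uverts I v P)")
    case False
    have w2: "uwalk I S y ((h,d') # P) w" using hw less.prems(1)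
      using uwalk_append[of I S y "[(h,d')]" P w] by auto
    have d2: "distinct (uverts I y ((h,d') # P))"
      using False less.prems(3) hinc by (auto simp: d'_def y_def)
    show ?thesis using less.hyps[OF _ w2 _ d2] lenP by simp
  next
    case True
    then obtain i where i: "i < Suc (length P)" "uverts I v P ! i = y"
      by (metis in_set_conv_nth uverts_length)
    have tw: "uwalk I S v (take i P) y" using uwalk_take_drop[OF less.prems(1), of i] i by simp
    define C where "C = (h,d') # take i P"
    have Cw: "uwalk I S y C y" unfolding C_def using hw tw uwalk_append[of I S y "[(h,d')]" "take i P" y]
      by (metis append_Cons append_Nil)
    have hnot: "h \<notin> fst ` set (take i P)"
    proof
      assume "h \<in> fst ` set (take i P)"
      then obtain k where k: "k < i" "k < length P" "fst (P!k) = h"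
        by (auto simp: in_set_conv_nth)
      have ends: "{tail I h, head I h} = {uverts I v P ! k, uverts I v P ! Suc k}"
        using uwalk_nth_ends[OF less.prems(1) k(2)] k(3) by simp
      have "v \<in> {uverts I v P ! k, uverts I v P ! Suc k}" using ends hinc by auto
      moreover have "uverts I v P ! 0 = v" by simp
      ultimately have "k = 0"
        using less.prems(3) k nth_eq_iff_index_eq[of "uverts I v P" k 0]
          nth_eq_iff_index_eq[of "uverts I v P" "Suc k" 0] by auto
      then show False using k hg P by simp
    qed
    have dC: "distinct (map fst C)" using hnot dfst
      by (simp add: C_def distinct_take take_map[symmetric]) (metis set_map take_map)
    have tlC: "tl (uverts I y C) = take (Suc i) (uverts I v P)"
      using hinc uverts_take[of i P I v] i by (auto simp: C_def d'_def y_def)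
    have "ucycle_at I S y C"
      unfolding ucycle_at_def using Cw dC tlC less.prems(3) by (simp add: C_def)
    then show ?thesis by blast
  qed
qed

lemma acyclic_circ_zero:
  assumes wf: "wf_inst I" and FE: "F \<subseteq> edges I" and acyc: "\<not> (\<exists>v p. ucycle_at I F v p)"
    and c: "circ I z" and out: "\<And>g. g \<in> edges I \<Longrightarrow> g \<notin> F \<Longrightarrow> z g = 0"
  shows "\<And>g. g \<in> edges I \<Longrightarrow> z g = 0"
proof (rule ccontr)
  fix g0 assume g0: "g0 \<in> edges I" "z g0 \<noteq> 0"
  define S where "S = {g\<in>F. z g \<noteq> 0}"
  have SF: "S \<subseteq> F" by (auto simp: S_def)
  have g0S: "g0 \<in> S" using g0 out by (auto simp: S_def)
  have finE: "finite (edges I)" using wf by (simp add: wf_inst_def)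
  have cyc_mono: "\<not> ucycle_at I S y C" for y C
  proof
    assume "ucycle_at I S y C"
    then have "ucycle_at I F y C" unfolding ucycle_at_def using uwalk_mono[of I S y C y F] SF by blast
    then show False using acyc by blast
  qed
  show False
  proof (cases "\<exists>g\<in>S. tail I g = head I g")
    case True
    then obtain g where "g \<in> S" "tail I g = head I g" by blast
    then have "ucycle_at I S (tail I g) [(g,True)]" by (simp add: ucycle_at_def)
    then show False using cyc_mono by blast
  next
    case False
    have deg: "\<exists>h\<in>S. h \<noteq> g \<and> (tail I h = v \<or> head I h = v)"
      if gS: "g \<in> S" and inc: "tail I g = v \<or> head I g = v" for g v
    proof (rule ccontr)
      assume no: "\<not> ?thesis"
      have gE: "g \<in> edges I" using gS SF FE by auto
      have vN: "v \<in> nodes I" using inc gE wf by (auto simp: wf_inst_def)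
      have zero: "z h = 0" if "h \<in> edges I" "h \<noteq> g" "tail I h = v \<or> head I h = v" for h
        using no that out by (auto simp: S_def)
      have sh: "(\<Sum>h\<in>{h\<in>edges I. head I h = v}. z h) = (if head I g = v then z g else 0)"
      proof -
        have "(\<Sum>h\<in>{h\<in>edges I. head I h = v}. z h) = (\<Sum>h\<in>{h\<in>edges I. head I h = v}. if h = g then z g else 0)"
          by (rule sum.cong) (auto intro: zero)
        then show ?thesis using finE gE by (simp add: sum.delta)
      qed
      have st: "(\<Sum>h\<in>{h\<in>edges I. tail I h = v}. z h) = (if tail I g = v then z g else 0)"
      proof -
        have "(\<Sum>h\<in>{h\<in>edges I. tail I h = v}. z h) = (\<Sum>h\<in>{h\<in>edges I. tail I h = v}. if h = g then z g else 0)"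
          by (rule sum.cong) (auto intro: zero)
        then show ?thesis using finE gE by (simp add: sum.delta)
      qed
      have "z g \<noteq> 0" using gS by (simp add: S_def)
      moreover have "tail I g \<noteq> head I g" using False gS by blast
      moreover have "(\<Sum>h\<in>{h\<in>edges I. head I h = v}. z h) = (\<Sum>h\<in>{h\<in>edges I. tail I h = v}. z h)"
        using c vN unfolding circ_def by blast
      ultimately show False using sh st inc by (auto split: if_splits)
    qed
    have w: "uwalk I S (tail I g0) [(g0,True)] (head I g0)" using g0S by simp
    have d: "distinct (uverts I (tail I g0) [(g0,True)])" using False g0S by auto
    have SE: "S \<subseteq> edges I" using SF FE by blast
    have nl: "\<And>g. g \<in> S \<Longrightarrow> tail I g \<noteq> head I g" using False by blast
    obtain y C where "ucycle_at I S y C" using find_cycle[OF wf SE nl deg w _ d] by blast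
    then show False using cyc_mono by blast
  qed
qed

lemma path_unique:
  "uwalk I F v p w \<Longrightarrow> uwalk I F' v q w' \<Longrightarrow> distinct (uverts I v p) \<Longrightarrow>
   distinct (uverts I v q) \<Longrightarrow> set p = set q \<Longrightarrow> p = q"
proof (induction p arbitrary: v q w')
  case Nil then show ?case by simp
next
  case (Cons a p)
  obtain g d where a: "a = (g,d)" by force
  obtain b q' where q: "q = b # q'" using Cons.prems(5) by (cases q) auto
  obtain h e where b: "b = (h,e)" by force
  have ab: "b = a"
  proof (rule ccontr)
    assume ne: "b \<noteq> a"
    then have "b \<in> set p" using Cons.prems(5) q by auto
    then obtain k where k: "k < length p" "p ! k = b" by (auto simp: in_set_conv_nth)
    have "(a#p) ! Suc k = (h,e)" using k b by simp
    from uwalk_nth[OF Cons.prems(1) _ this] k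
    have s: "(if e then tail I h = uverts I v (a#p) ! Suc k else head I h = uverts I v (a#p) ! Suc k)"
      by (auto split: if_splits)
    have "(if e then tail I h = v else head I h = v)" using Cons.prems(2) q b by (auto split: if_splits)
    then have "uverts I v (a#p) ! Suc k = uverts I v (a#p) ! 0" using s by (auto split: if_splits)
    then show False using Cons.prems(3) k nth_eq_iff_index_eq[of "uverts I v (a#p)" "Suc k" 0] by simp
  qed
  have dp: "distinct (a#p)" using path_distinct_edges[OF Cons.prems(1,3)] distinct_map by blast
  have dq: "distinct q" using path_distinct_edges[OF Cons.prems(2,4)] distinct_map by blast
  have sp: "set p = set q'" using Cons.prems(5) q ab dp dq by auto
  define u where "u = (if d then head I g else tail I g)"
  have w1: "uwalk I F u p w" using Cons.prems(1) a by (auto simp: u_def split: if_splits)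
  have w2: "uwalk I F' u q' w'" using Cons.prems(2) a q ab by (auto simp: u_def split: if_splits)
  have d1: "distinct (uverts I u p)" using Cons.prems(3) a by (simp add: u_def)
  have d2: "distinct (uverts I u q')" using Cons.prems(4) a q ab by (simp add: u_def)
  show ?case using Cons.IH[OF w1 w2 d1 d2 sp] q ab by simp
qed

locale tree_ctx =
  fixes I :: "('v, 'e, 'z) bmcf_scheme" and T :: "'e set"
  assumes wf: "wf_inst I" and st: "spanning_tree I T"
begin

lemma finE: "finite (edges I)" using wf by (simp add: wf_inst_def)
lemma TE: "T \<subseteq> edges I" using st by (simp add: spanning_tree_def)
lemma acyc: "\<not> (\<exists>v p. ucycle_at I T v p)" using st by (simp add: spanning_tree_def)
lemma ends: "g \<in> edges I \<Longrightarrow> tail I g \<in> nodes I \<and> head I g \<in> nodes I"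
  using wf by (simp add: wf_inst_def)

lemma circ_T_zero: "circ I z \<Longrightarrow> (\<And>g. g \<in> edges I \<Longrightarrow> g \<notin> T \<Longrightarrow> z g = 0) \<Longrightarrow> g \<in> edges I \<Longrightarrow> z g = 0"
  using acyclic_circ_zero[OF wf TE acyc] by blast

lemma fcycle_ex:
  assumes f: "f \<in> edges I" "f \<notin> T"
  shows "\<exists>p. ucycle_at I (insert f T) (tail I f) p \<and> hd p = (f,True)"
proof -
  obtain q0 where "uwalk I T (head I f) q0 (tail I f)"
    using st ends[OF f(1)] unfolding spanning_tree_def by blast
  then obtain q where q: "uwalk I T (head I f) q (tail I f)" "distinct (uverts I (head I f) q)"
    using shortest_walk[of I T "head I f" q0 "tail I f"] by blast
  have qT: "fst ` set q \<subseteq> T" using uwalk_edges[OF q(1)] .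
  have "uwalk I (insert f T) (head I f) q (tail I f)" using uwalk_mono[OF q(1), of "insert f T"] by blast
  moreover have "distinct (map fst q)" using path_distinct_edges[OF q] .
  ultimately have "ucycle_at I (insert f T) (tail I f) ((f,True) # q)"
    using qT f q(2) by (auto simp: ucycle_at_def)
  then show ?thesis by fastforce
qed

lemma cyc_sub: "ucycle_at I F v p \<Longrightarrow> fst ` set p \<subseteq> F"
  using uwalk_edges[of I F v p v] unfolding ucycle_at_def by blast

lemma fcycle_unique:
  assumes f: "f \<in> edges I" "f \<notin> T"
    and p: "ucycle_at I (insert f T) (tail I f) p" "hd p = (f,True)"
    and q: "ucycle_at I (insert f T) (tail I f) q" "hd q = (f,True)"
  shows "p = q"
proof -
  have FE: "insert f T \<subseteq> edges I" using f TE by blast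
  have cp: "circ I (chi p)" using cycle_circ[OF finE FE p(1)] .
  have cq: "circ I (chi q)" using cycle_circ[OF finE FE q(1)] .
  have dp: "distinct (map fst p)" and dq: "distinct (map fst q)" using p q by (auto simp: ucycle_at_def)
  have pf: "(f,True) \<in> set p" using p by (cases p) (auto simp: ucycle_at_def)
  have qf: "(f,True) \<in> set q" using q by (cases q) (auto simp: ucycle_at_def)
  have sp: "fst ` set p \<subseteq> insert f T" and sq: "fst ` set q \<subseteq> insert f T"
    using cyc_sub p(1) q(1) by auto
  have cz: "circ I (\<lambda>g. chi p g - 1 * chi q g)" using circ_diff[OF cp cq] .
  have z: "chi p g - 1 * chi q g = 0" if "g \<in> edges I" for g
  proof (rule circ_T_zero[OF cz _ that])
    fix h assume h: "h \<in> edges I" "h \<notin> T"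
    show "chi p h - 1 * chi q h = 0"
    proof (cases "h = f")
      case True then show ?thesis using chi_set[OF dp] chi_set[OF dq] pf qf by simp
    next
      case False
      then have "h \<notin> fst ` set p" "h \<notin> fst ` set q" using sp sq h by auto
      then show ?thesis by (simp add: chi_zero)
    qed
  qed
  have eq: "chi p g = chi q g" for g
  proof (cases "g \<in> edges I")
    case True then show ?thesis using z by simp
  next
    case False
    then have "g \<notin> fst ` set p" "g \<notin> fst ` set q" using sp sq FE by auto
    then show ?thesis by (simp add: chi_zero)
  qed
  have setpq: "set p = set q"
  proof
    show "set p \<subseteq> set q"
    proof
      fix x assume "x \<in> set p"
      moreover obtain g b where "x = (g,b)" by force
      ultimately show "x \<in> set q" using chi_set[OF dp, of g] chi_set[OF dq, of g] eq[of g] by (cases b) auto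
    qed
    show "set q \<subseteq> set p"
    proof
      fix x assume "x \<in> set q"
      moreover obtain g b where "x = (g,b)" by force
      ultimately show "x \<in> set p" using chi_set[OF dp, of g] chi_set[OF dq, of g] eq[of g] by (cases b) auto
    qed
  qed
  obtain p' where p': "p = (f,True) # p'" using p by (cases p) (auto simp: ucycle_at_def)
  obtain q' where q': "q = (f,True) # q'" using q by (cases q) (auto simp: ucycle_at_def)
  have "set p' = set q'"
  proof -
    have "(f,True) \<notin> set p'" using dp p' by force
    moreover have "(f,True) \<notin> set q'" using dq q' by force
    ultimately have "set p' = set p - {(f,True)}" "set q' = set q - {(f,True)}"
      using p' q' by auto
    then show ?thesis using setpq by simp
  qed
  moreover have "uwalk I (insert f T) (head I f) p' (tail I f)" "distinct (uverts I (head I f) p')"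
    using p(1) p' by (auto simp: ucycle_at_def)
  moreover have "uwalk I (insert f T) (head I f) q' (tail I f)" "distinct (uverts I (head I f) q')"
    using q(1) q' by (auto simp: ucycle_at_def)
  ultimately have "p' = q'"
    using path_unique[of I "insert f T" "head I f" p' "tail I f" "insert f T" q' "tail I f"] by blast
  then show ?thesis using p' q' by simp
qed

lemma fcycle_prop:
  assumes f: "f \<in> edges I" "f \<notin> T"
  shows "ucycle_at I (insert f T) (tail I f) (fcycle I T f) \<and> hd (fcycle I T f) = (f,True)"
proof -
  have "\<exists>!p. ucycle_at I (insert f T) (tail I f) p \<and> hd p = (f,True)"
    using fcycle_ex[OF f] fcycle_unique[OF f] by blast
  then show ?thesis unfolding fcycle_def by (rule theI')
qed

lemma fc_circ: "f \<in> edges I \<Longrightarrow> f \<notin> T \<Longrightarrow> circ I (chi (fcycle I T f))"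
  using fcycle_prop cycle_circ[OF finE, of "insert f T"] TE by blast

lemma fc_f: "f \<in> edges I \<Longrightarrow> f \<notin> T \<Longrightarrow> chi (fcycle I T f) f = 1"
  using fcycle_prop[of f] chi_set[of "fcycle I T f" f]
  by (cases "fcycle I T f") (auto simp: ucycle_at_def)

lemma fc_supp:
  assumes "f \<in> edges I" "f \<notin> T" "g \<notin> insert f T" shows "chi (fcycle I T f) g = 0"
proof -
  have "fst ` set (fcycle I T f) \<subseteq> insert f T" using fcycle_prop[OF assms(1,2)] cyc_sub by blast
  then have "g \<notin> fst ` set (fcycle I T f)" using assms(3) by blast
  then show ?thesis by (rule chi_zero)
qed

end

lemma uwalk_restrict:
  "uwalk I F v p w \<Longrightarrow> fst ` set p \<subseteq> F' \<Longrightarrow> uwalk I F' v p w"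
  by (induction I F v p w rule: uwalk.induct) (auto split: if_splits)

context tree_ctx
begin

lemma finN: "finite (nodes I)" using wf by (simp add: wf_inst_def)

lemma sum_head:
  fixes p :: "'v \<Rightarrow> real" and z :: "'e \<Rightarrow> real"
  shows "(\<Sum>g\<in>edges I. p (head I g) * z g) = (\<Sum>v\<in>nodes I. p v * (\<Sum>g\<in>{g\<in>edges I. head I g = v}. z g))"
proof -
  have "(\<Sum>g\<in>edges I. p (head I g) * z g) = (\<Sum>v\<in>nodes I. \<Sum>g\<in>{g\<in>edges I. head I g = v}. p (head I g) * z g)"
  proof -
    have "head I ` edges I \<subseteq> nodes I" using ends by auto
    then show ?thesis using sum.group[OF finE finN, of "head I" "\<lambda>g. p (head I g) * z g"] by simp
  qed
  also have "\<dots> = (\<Sum>v\<in>nodes I. p v * (\<Sum>g\<in>{g\<in>edges I. head I g = v}. z g))"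
    by (rule sum.cong) (auto simp: sum_distrib_left intro: sum.cong)
  finally show ?thesis .
qed

lemma sum_tail:
  fixes p :: "'v \<Rightarrow> real" and z :: "'e \<Rightarrow> real"
  shows "(\<Sum>g\<in>edges I. p (tail I g) * z g) = (\<Sum>v\<in>nodes I. p v * (\<Sum>g\<in>{g\<in>edges I. tail I g = v}. z g))"
proof -
  have "(\<Sum>g\<in>edges I. p (tail I g) * z g) = (\<Sum>v\<in>nodes I. \<Sum>g\<in>{g\<in>edges I. tail I g = v}. p (tail I g) * z g)"
  proof -
    have "tail I ` edges I \<subseteq> nodes I" using ends by auto
    then show ?thesis using sum.group[OF finE finN, of "tail I" "\<lambda>g. p (tail I g) * z g"] by simp
  qed
  also have "\<dots> = (\<Sum>v\<in>nodes I. p v * (\<Sum>g\<in>{g\<in>edges I. tail I g = v}. z g))"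
    by (rule sum.cong) (auto simp: sum_distrib_left intro: sum.cong)
  finally show ?thesis .
qed

lemma circ_weighted:
  assumes c: "circ I z"
  shows "(\<Sum>g\<in>edges I. reduced I w p g * z g) = (\<Sum>g\<in>edges I. w g * z g)"
proof -
  have eq: "(\<Sum>g\<in>edges I. p (head I g) * z g) = (\<Sum>g\<in>edges I. p (tail I g) * z g)"
    unfolding sum_head sum_tail using c by (auto simp: circ_def intro: sum.cong)
  have "(\<Sum>g\<in>edges I. reduced I w p g * z g) =
     (\<Sum>g\<in>edges I. w g * z g) - (\<Sum>g\<in>edges I. p (tail I g) * z g) + (\<Sum>g\<in>edges I. p (head I g) * z g)"
    by (simp add: reduced_def algebra_simps sum.distrib sum_subtractf)
  then show ?thesis using eq by simp
qed

lemma bC_red: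
  assumes f: "f \<in> edges I" "f \<notin> T" and pot: "is_potential I T r w p"
  shows "reduced I w p f = (\<Sum>g\<in>edges I. w g * chi (fcycle I T f) g)"
proof -
  have "(\<Sum>g\<in>edges I. w g * chi (fcycle I T f) g) = (\<Sum>g\<in>edges I. reduced I w p g * chi (fcycle I T f) g)"
    using circ_weighted[OF fc_circ[OF f]] by simp
  also have "\<dots> = (\<Sum>g\<in>edges I. if g = f then reduced I w p f else 0)"
  proof (rule sum.cong)
    fix g assume "g \<in> edges I"
    show "reduced I w p g * chi (fcycle I T f) g = (if g = f then reduced I w p f else 0)"
    proof (cases "g = f")
      case True then show ?thesis using fc_f[OF f] by simp
    next
      case False
      show ?thesis
      proof (cases "g \<in> T")
        case True then show ?thesis using pot False by (simp add: is_potential_def)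
      next
        case False2: False
        then show ?thesis using fc_supp[OF f, of g] False by simp
      qed
    qed
  qed simp
  also have "\<dots> = reduced I w p f" using finE f by (simp add: sum.delta)
  finally show ?thesis by simp
qed

lemma exchange:
  assumes f: "f \<in> edges I" "f \<notin> T" and e': "e' \<in> T" and nz: "chi (fcycle I T f) e' \<noteq> 0"
  shows "spanning_tree I (T \<union> {f} - {e'})"
proof -
  define T' where "T' = T \<union> {f} - {e'}"
  define C where "C = fcycle I T f"
  have T'E: "T' \<subseteq> edges I" using TE f by (auto simp: T'_def)
  have Cp: "ucycle_at I (insert f T) (tail I f) C" "hd C = (f,True)" using fcycle_prop[OF f] by (auto simp: C_def)
  have e'E: "e' \<in> edges I" using e' TE by blast
  have acyc': "\<not> ucycle_at I T' v Q" for v Q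
  proof
    assume Q: "ucycle_at I T' v Q"
    define w where "w = chi Q"
    have cw: "circ I w" using cycle_circ[OF finE T'E Q] by (simp add: w_def)
    have QT': "fst ` set Q \<subseteq> T'" using cyc_sub[OF Q] .
    have cz: "circ I (\<lambda>g. w g - w f * chi C g)" using circ_diff[OF cw fc_circ[OF f]] by (simp add: C_def)
    have z: "w g - w f * chi C g = 0" if "g \<in> edges I" for g
    proof (rule circ_T_zero[OF cz _ that])
      fix h assume h: "h \<in> edges I" "h \<notin> T"
      show "w h - w f * chi C h = 0"
      proof (cases "h = f")
        case True then show ?thesis using fc_f[OF f] by (simp add: C_def)
      next
        case False
        then have "h \<notin> fst ` set Q" using QT' h by (auto simp: T'_def)
        then show ?thesis using fc_supp[OF f, of h] False h by (simp add: w_def C_def chi_zero)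
      qed
    qed
    have we': "w e' = 0" using QT' by (auto simp: w_def T'_def intro!: chi_zero)
    have "w f * chi C e' = 0" using z[OF e'E] we' by simp
    then have wf0: "w f = 0" using nz by (simp add: C_def)
    obtain g b Q' where Qc: "Q = (g,b) # Q'" using Q by (cases Q) (auto simp: ucycle_at_def)
    have gE: "g \<in> edges I" using QT' T'E Qc by auto
    have "w g = 0" using z[OF gE] wf0 by simp
    moreover have "w g \<noteq> 0" unfolding w_def by (rule chi_nonzero) (simp add: Qc)
    ultimately show False by simp
  qed
  have bridge: "\<exists>q. uwalk I T' (tail I g) q (head I g)" if "g \<in> T" "g \<notin> T'" for g
  proof -
    have ge: "g = e'" using that f by (auto simp: T'_def)
    have "e' \<in> fst ` set C"
    proof (rule ccontr)
      assume "e' \<notin> fst ` set C"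
      then have "chi C e' = 0" by (rule chi_zero)
      then show False using nz by (simp add: C_def)
    qed
    then obtain k where k: "k < length C" "fst (C ! k) = e'" by (auto simp: in_set_conv_nth)
    have Cw: "uwalk I (insert f T) (tail I f) C (tail I f)" and dC: "distinct (map fst C)"
      using Cp by (auto simp: ucycle_at_def)
    let ?vk = "uverts I (tail I f) C ! k" and ?vk1 = "uverts I (tail I f) C ! Suc k"
    have w1: "uwalk I (insert f T) (tail I f) (take k C) ?vk"
      using uwalk_take_drop[OF Cw, of k] k by simp
    have w2: "uwalk I (insert f T) ?vk1 (drop (Suc k) C) (tail I f)"
      using uwalk_take_drop[OF Cw, of "Suc k"] k by simp
    have ends_e: "{tail I e', head I e'} = {?vk, ?vk1}" using uwalk_nth_ends[OF Cw k(1)] k(2) by simp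
    have Cs: "C = take k C @ C ! k # drop (Suc k) C" using k(1) by (simp add: id_take_nth_drop)
    have "distinct (map fst (take k C @ C ! k # drop (Suc k) C))" using dC Cs by simp
    then have ne: "e' \<notin> fst ` set (take k C)" "e' \<notin> fst ` set (drop (Suc k) C)" using k(2) by auto
    have sub1: "fst ` set (take k C) \<subseteq> insert f T" using uwalk_edges[OF w1] .
    have sub2: "fst ` set (drop (Suc k) C) \<subseteq> insert f T" using uwalk_edges[OF w2] .
    have "uwalk I (insert f T) ?vk1 (drop (Suc k) C @ take k C) ?vk"
      using w1 w2 uwalk_append[of I "insert f T" ?vk1 "drop (Suc k) C" "take k C" ?vk] by blast
    moreover have "fst ` set (drop (Suc k) C @ take k C) \<subseteq> T'"
      using ne sub1 sub2 by (auto simp: T'_def)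
    ultimately have Qw: "uwalk I T' ?vk1 (drop (Suc k) C @ take k C) ?vk" by (rule uwalk_restrict)
    have Qr: "uwalk I T' ?vk (rwalk (drop (Suc k) C @ take k C)) ?vk1" using uwalk_rev[OF Qw] .
    show ?thesis
    proof (cases "tail I e' = ?vk")
      case True
      then have "head I e' = ?vk1 \<or> tail I e' = head I e'" using ends_e by (auto simp: doubleton_eq_iff)
      then show ?thesis
      proof
        assume "head I e' = ?vk1" then show ?thesis using Qr True ge by metis
      next
        assume "tail I e' = head I e'"
        then have "uwalk I T' (tail I g) [] (head I g)" using ge by simp
        then show ?thesis by blast
      qed
    next
      case False
      then have "tail I e' = ?vk1" "head I e' = ?vk" using ends_e by (auto simp: doubleton_eq_iff)
      then show ?thesis using Qw ge by metis
    qed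
  qed
  have conn: "\<exists>p. uwalk I T' v p w" if vw: "v \<in> nodes I" "w \<in> nodes I" for v w
  proof -
    obtain p where "uwalk I T v p w" using st vw unfolding spanning_tree_def by blast
    then show ?thesis using uwalk_reroute[of I T v p w T'] bridge by blast
  qed
  show ?thesis unfolding spanning_tree_def T'_def[symmetric] using T'E acyc' conn by blast
qed

end

context tree_ctx
begin

lemma basic_circ: "is_basic_sol I L U x \<Longrightarrow> circ I x"
  by (simp add: is_basic_sol_def circ_def)

lemma basic_unique:
  assumes eb: "eb \<in> edges I" "eb \<notin> T" and bc: "bC I T eb \<noteq> 0"
    and cover: "\<And>g. g \<in> edges I \<Longrightarrow> g \<notin> T \<Longrightarrow> g \<noteq> eb \<Longrightarrow> g \<in> L \<union> U"
    and x: "is_basic_sol I L U x" and y: "is_basic_sol I L U y"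
  shows "x = y"
proof -
  define z where "z = (\<lambda>g. x g - 1 * y g)"
  define ch where "ch = chi (fcycle I T eb)"
  have cz: "circ I z" unfolding z_def by (rule circ_diff[OF basic_circ[OF x] basic_circ[OF y]])
  have cw: "circ I (\<lambda>g. z g - z eb * ch g)" unfolding ch_def by (rule circ_diff[OF cz fc_circ[OF eb]])
  have zz: "z g - z eb * ch g = 0" if "g \<in> edges I" for g
  proof (rule circ_T_zero[OF cw _ that])
    fix h assume h: "h \<in> edges I" "h \<notin> T"
    show "z h - z eb * ch h = 0"
    proof (cases "h = eb")
      case True then show ?thesis using fc_f[OF eb] by (simp add: ch_def)
    next
      case False
      then have "h \<in> L \<union> U" using cover h by blast
      then have "z h = 0" using x y by (auto simp: is_basic_sol_def z_def)
      moreover have "ch h = 0" using fc_supp[OF eb, of h] False h by (simp add: ch_def)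
      ultimately show ?thesis by simp
    qed
  qed
  have "(\<Sum>g\<in>edges I. feer I g * z g) = (\<Sum>g\<in>edges I. feer I g * x g) - (\<Sum>g\<in>edges I. feer I g * y g)"
    by (simp add: z_def algebra_simps sum_subtractf)
  also have "\<dots> = 0" using x y by (simp add: is_basic_sol_def)
  finally have s0: "(\<Sum>g\<in>edges I. feer I g * z g) = 0" .
  have "(\<Sum>g\<in>edges I. feer I g * z g) = (\<Sum>g\<in>edges I. z eb * (feer I g * ch g))"
    by (rule sum.cong) (use zz in \<open>auto simp: algebra_simps\<close>)
  also have "\<dots> = z eb * bC I T eb" by (simp add: bC_def ch_def sum_distrib_left)
  finally have "z eb = 0" using s0 bc by simp
  then have "z g = 0" if "g \<in> edges I" for g using zz[OF that] by simp
  then have "x g = y g" for g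
    using x y by (cases "g \<in> edges I") (auto simp: z_def is_basic_sol_def)
  then show ?thesis by blast
qed

lemma basic_exists:
  assumes eb: "eb \<in> edges I" "eb \<notin> T" and bc: "bC I T eb \<noteq> 0"
    and UE: "U \<subseteq> edges I" and UT: "U \<inter> T = {}" and ebU: "eb \<notin> U" and LU: "L \<inter> U = {}"
    and LT: "L \<inter> T = {}" and ebL: "eb \<notin> L"
  shows "\<exists>x. is_basic_sol I L U x"
proof -
  define ch where "ch = (\<lambda>g. chi (fcycle I T g))"
  define c where "c = (\<lambda>g. real (cap I g))"
  define y where "y = (\<lambda>h. \<Sum>g\<in>U. c g * ch g h)"
  have finU: "finite U" using UE finite_subset finE by blast
  have gU: "g \<in> edges I" "g \<notin> T" if "g \<in> U" for g using that UE UT by auto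
  have cy: "circ I y" unfolding circ_def
  proof
    fix v assume v: "v \<in> nodes I"
    have "(\<Sum>h\<in>{h\<in>edges I. head I h = v}. y h) = (\<Sum>g\<in>U. c g * (\<Sum>h\<in>{h\<in>edges I. head I h = v}. ch g h))"
      unfolding y_def by (subst sum.swap) (simp add: sum_distrib_left)
    also have "\<dots> = (\<Sum>g\<in>U. c g * (\<Sum>h\<in>{h\<in>edges I. tail I h = v}. ch g h))"
      by (rule sum.cong) (use fc_circ gU v in \<open>auto simp: circ_def ch_def\<close>)
    also have "\<dots> = (\<Sum>h\<in>{h\<in>edges I. tail I h = v}. y h)"
      unfolding y_def by (subst sum.swap) (simp add: sum_distrib_left)
    finally show "(\<Sum>h\<in>{h\<in>edges I. head I h = v}. y h) = (\<Sum>h\<in>{h\<in>edges I. tail I h = v}. y h)" .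
  qed
  define Y where "Y = (\<Sum>h\<in>edges I. feer I h * y h)"
  define t where "t = (real (budget I) - Y) / bC I T eb"
  define x where "x = (\<lambda>h. y h + t * ch eb h)"
  have cx: "circ I x" unfolding x_def ch_def by (rule circ_add[OF cy fc_circ[OF eb]])
  have yzero: "y h = 0" if hh: "h \<notin> U" "h \<notin> T" for h
    unfolding y_def
  proof (rule sum.neutral, rule ballI)
    fix g assume g: "g \<in> U"
    then have "h \<notin> insert g T" using hh by auto
    then show "c g * ch g h = 0" using fc_supp[OF gU[OF g]] by (simp add: ch_def)
  qed
  have ebzero: "ch eb h = 0" if "h \<noteq> eb" "h \<notin> T" for h
    using fc_supp[OF eb] that by (simp add: ch_def)
  have yU: "y h = c h" if "h \<in> U" for h
  proof -
    have "y h = (\<Sum>g\<in>U. if g = h then c h else 0)"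
      unfolding y_def
    proof (rule sum.cong)
      fix g assume g: "g \<in> U"
      show "c g * ch g h = (if g = h then c h else 0)"
      proof (cases "g = h")
        case True then show ?thesis using fc_f gU g by (simp add: ch_def)
      next
        case False then show ?thesis using fc_supp gU g that UT by (auto simp: ch_def)
      qed
    qed simp
    then show ?thesis using finU that by (simp add: sum.delta')
  qed
  have budget: "(\<Sum>h\<in>edges I. feer I h * x h) = real (budget I)"
  proof -
    have "(\<Sum>h\<in>edges I. feer I h * x h) = Y + t * bC I T eb"
      by (simp add: x_def Y_def bC_def ch_def algebra_simps sum.distrib sum_distrib_left)
    then show ?thesis using bc by (simp add: t_def)
  qed
  have "is_basic_sol I L U x"
    unfolding is_basic_sol_def
  proof (intro conjI ballI allI impI)
    show "\<And>v. v \<in> nodes I \<Longrightarrow> (\<Sum>g\<in>{g\<in>edges I. head I g = v}. x g) = (\<Sum>g\<in>{g\<in>edges I. tail I g = v}. x g)"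
      using cx by (simp add: circ_def)
  next
    fix g assume "g \<in> L"
    then have "g \<notin> U" "g \<notin> T" "g \<noteq> eb" using LU LT ebL by auto
    then show "x g = 0" using yzero ebzero by (simp add: x_def)
  next
    fix g assume "g \<in> U"
    moreover have "g \<notin> T" "g \<noteq> eb" using \<open>g \<in> U\<close> ebU UT by auto
    ultimately show "x g = real (cap I g)" using yU ebzero by (simp add: x_def c_def)
  next
    show "(\<Sum>g\<in>edges I. real (fee I g) * x g) = real (budget I)" using budget by simp
  next
    fix g assume g: "g \<notin> edges I"
    then have "g \<notin> U" "g \<notin> T" "g \<noteq> eb" using UE TE eb by auto
    then show "x g = 0" using yzero ebzero by (simp add: x_def)
  qed
  then show ?thesis by blast
qed

end

lemma basis_sol:
  assumes wf: "wf_inst I" and bs: "basis_structure I L T U eb"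
  shows "is_basic_sol I L U (basic_sol I L U)"
    and "is_basic_sol I L U x \<Longrightarrow> basic_sol I L U = x"
proof -
  have st: "spanning_tree I T" using bs by (simp add: basis_structure_def)
  interpret tree_ctx I T using wf st by unfold_locales
  have eb: "eb \<in> edges I" "eb \<notin> T" and bc: "bC I T eb \<noteq> 0"
    and part: "L \<union> T \<union> U = edges I - {eb}" "L \<inter> T = {}" "L \<inter> U = {}" "T \<inter> U = {}"
    using bs by (auto simp: basis_structure_def)
  have cover: "\<And>g. g \<in> edges I \<Longrightarrow> g \<notin> T \<Longrightarrow> g \<noteq> eb \<Longrightarrow> g \<in> L \<union> U"
    using part(1) by blast
  have uniq: "\<And>x y. is_basic_sol I L U x \<Longrightarrow> is_basic_sol I L U y \<Longrightarrow> x = y"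
    using basic_unique[OF eb bc cover] by blast
  have UE: "U \<subseteq> edges I" and ebU: "eb \<notin> U" and ebL: "eb \<notin> L" using part(1) by auto
  have UT: "U \<inter> T = {}" using part(4) by blast
  obtain x0 where x0: "is_basic_sol I L U x0"
    using basic_exists[OF eb bc UE UT ebU part(3) part(2) ebL] by blast
  have ex1: "\<exists>!x. is_basic_sol I L U x" using x0 uniq by blast
  show "is_basic_sol I L U (basic_sol I L U)" unfolding basic_sol_def using theI'[OF ex1] .
  then show "is_basic_sol I L U x \<Longrightarrow> basic_sol I L U = x" using uniq by blast
qed

lemma deltaf_nonneg:
  assumes "0 \<le> x f" "x f \<le> real (cap I f)"
  shows "0 \<le> pv_deltaf I x th f"
  using assms by (auto simp: pv_deltaf_def divide_nonpos_neg divide_nonneg_pos divide_nonneg_neg)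

lemma deltaf_bound:
  assumes le: "ereal d \<le> pv_deltaf I x th f" and d: "0 \<le> d"
    and x: "0 \<le> x f" "x f \<le> real (cap I f)"
  shows "0 \<le> x f + d * th f \<and> x f + d * th f \<le> real (cap I f)"
proof (cases "th f < 0")
  case True
  then have dle: "d \<le> - (x f / th f)" using le by (simp add: pv_deltaf_def)
  have "- (x f / th f) * th f \<le> d * th f" using mult_right_mono_neg[OF dle, of "th f"] True by simp
  then have "- x f \<le> d * th f" using True by simp
  moreover have "d * th f \<le> 0" using True d by (simp add: mult_nonneg_nonpos)
  ultimately show ?thesis using x by simp
next
  case False
  show ?thesis
  proof (cases "th f > 0")
    case True
    then have "d \<le> (real (cap I f) - x f) / th f" using le False by (simp add: pv_deltaf_def)
    then have "d * th f \<le> real (cap I f) - x f" using True by (simp add: le_divide_eq)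
    moreover have "0 \<le> d * th f" using True d by simp
    ultimately show ?thesis using x by simp
  next
    case False2: False
    then have "th f = 0" using False by simp
    then show ?thesis using x by simp
  qed
qed

lemma deltaf_eq:
  assumes "pv_deltaf I x th f = ereal d"
  shows "(th f < 0 \<and> x f + d * th f = 0) \<or> (th f > 0 \<and> x f + d * th f = real (cap I f))"
  using assms by (auto simp: pv_deltaf_def split: if_splits)

lemma circ_scale: "circ I z \<Longrightarrow> circ I (\<lambda>g. a * z g)"
  by (simp add: circ_def sum_distrib_left[symmetric])

lemma mk_basic:
  assumes "circ I x" "\<forall>g\<in>L. x g = 0" "\<forall>g\<in>U. x g = real (cap I g)"
    "(\<Sum>g\<in>edges I. real (fee I g) * x g) = real (budget I)" "\<forall>g. g \<notin> edges I \<longrightarrow> x g = 0"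
  shows "is_basic_sol I L U x"
  using assms by (simp add: is_basic_sol_def circ_def)

lemma finish:
  assumes wf: "wf_inst I" and bs: "basis_structure I L T U eb" and x: "is_basic_sol I L U x"
    and bd: "\<forall>g\<in>edges I. 0 \<le> x g \<and> x g \<le> real (cap I g)"
  shows "feasible_basis I L T U eb \<and> bC I T eb \<noteq> 0"
  using basis_sol(2)[OF wf bs x] bs bd by (simp add: feasible_basis_def basis_structure_def)

context tree_ctx
begin

lemma key:
  assumes e: "e \<in> edges I" "e \<notin> T" and eb: "eb \<in> edges I" "eb \<notin> T" and ne: "e \<noteq> eb"
    and bc: "bC I T eb \<noteq> 0" and e'E: "e' \<in> edges I"
    and nz: "chi (fcycle I T e) e' - bC I T e / bC I T eb * chi (fcycle I T eb) e' \<noteq> 0"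
    and cw: "circ I w" and supp: "\<And>g. g \<in> edges I \<Longrightarrow> g \<notin> T \<Longrightarrow> g \<noteq> e \<Longrightarrow> g \<noteq> eb \<Longrightarrow> w g = 0"
    and we': "w e' = 0" and fs: "(\<Sum>g\<in>edges I. real (fee I g) * w g) = 0"
  shows "w e = 0 \<and> w eb = 0"
proof -
  define ce where "ce = chi (fcycle I T e)"
  define cb where "cb = chi (fcycle I T eb)"
  have c1: "circ I (\<lambda>g. w g - w e * ce g)" unfolding ce_def by (rule circ_diff[OF cw fc_circ[OF e]])
  have c2: "circ I (\<lambda>g. (w g - w e * ce g) - w eb * cb g)" unfolding cb_def
    by (rule circ_diff[OF c1 fc_circ[OF eb]])
  have ceb: "ce eb = 0" using fc_supp[OF e, of eb] ne eb by (simp add: ce_def)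
  have cbe: "cb e = 0" using fc_supp[OF eb, of e] ne e by (simp add: cb_def)
  have z: "(w g - w e * ce g) - w eb * cb g = 0" if "g \<in> edges I" for g
  proof (rule circ_T_zero[OF c2 _ that])
    fix h assume h: "h \<in> edges I" "h \<notin> T"
    show "(w h - w e * ce h) - w eb * cb h = 0"
    proof (cases "h = e")
      case True then show ?thesis using fc_f[OF e] cbe by (simp add: ce_def)
    next
      case False
      show ?thesis
      proof (cases "h = eb")
        case True then show ?thesis using fc_f[OF eb] ceb by (simp add: cb_def)
      next
        case False2: False
        then show ?thesis using supp[OF h False False2] fc_supp[OF e, of h] fc_supp[OF eb, of h] h False
          by (simp add: ce_def cb_def)
      qed
    qed
  qed
  have "(\<Sum>g\<in>edges I. real (fee I g) * w g) = (\<Sum>g\<in>edges I. w e * (real (fee I g) * ce g) + w eb * (real (fee I g) * cb g))"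
    by (rule sum.cong) (use z in \<open>auto simp: algebra_simps\<close>)
  also have "\<dots> = w e * bC I T e + w eb * bC I T eb"
    by (simp add: sum.distrib sum_distrib_left[symmetric] bC_def ce_def cb_def)
  finally have eq1: "w e * bC I T e + w eb * bC I T eb = 0" using fs by simp
  have eq2: "w e * ce e' + w eb * cb e' = 0" using z[OF e'E] we' by simp
  have web: "w eb = - w e * bC I T e / bC I T eb" using eq1 bc by (simp add: field_simps)
  have "w e * (ce e' - bC I T e / bC I T eb * cb e') = 0"
    using eq2 unfolding web by (simp add: algebra_simps)
  then have "w e = 0" using nz by (simp add: ce_def cb_def)
  then show ?thesis using web by simp
qed

end

theorem lemma1:
  fixes I :: "('v, 'e) bmcf"
    and L T U :: "'e set" and eb e e' :: 'e and r :: 'v and \<pi> \<mu> :: "'v \<Rightarrow> real"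
  assumes wf: "wf_inst I"
    and root: "r \<in> nodes I"
    and feas: "feasible_basis I L T U eb"
    and pot_pi: "is_potential I T r (costr I) \<pi>"
    and pot_mu: "is_potential I T r (feer I) \<mu>"
    and entering: "(e \<in> L \<and> dval I \<pi> \<mu> eb e < 0) \<or> (e \<in> U \<and> dval I \<pi> \<mu> eb e > 0)"
    and leaving: "is_leaving I L T U eb \<mu> e e'"
  shows "case pivot_tuple I L T U eb \<mu> e e' of (L', T', U', eb') \<Rightarrow>
           feasible_basis I L' T' U' eb' \<and> bC I T' eb' \<noteq> 0"
proof -
  have bs: "basis_structure I L T U eb" using feas by (simp add: feasible_basis_def)
  have ebE: "eb \<in> edges I" and part: "L \<union> T \<union> U = edges I - {eb}" "L \<inter> T = {}" "L \<inter> U = {}" "T \<inter> U = {}"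
    and st: "spanning_tree I T" and bc: "bC I T eb \<noteq> 0"
    using bs by (auto simp: basis_structure_def)
  interpret tree_ctx I T using wf st by unfold_locales
  have ebT: "eb \<notin> T" using part(1) by blast
  have ebL: "eb \<notin> L" and ebU: "eb \<notin> U" using part(1) by blast+
  have LE: "L \<subseteq> edges I" and UE: "U \<subseteq> edges I" using part(1) by blast+
  define x where "x = basic_sol I L U"
  have xs: "is_basic_sol I L U x" unfolding x_def by (rule basis_sol(1)[OF wf bs])
  have xb: "0 \<le> x g \<and> x g \<le> real (cap I g)" if "g \<in> edges I" for g
    using feas that by (simp add: feasible_basis_def x_def)
  have xL: "x g = 0" if "g \<in> L" for g using xs that by (simp add: is_basic_sol_def)
  have xU: "x g = real (cap I g)" if "g \<in> U" for g using xs that by (simp add: is_basic_sol_def)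
  have xoff: "x g = 0" if "g \<notin> edges I" for g using xs that by (simp add: is_basic_sol_def)
  have eLU: "e \<in> L \<or> e \<in> U" using entering by blast
  have eE: "e \<in> edges I" and eT: "e \<notin> T" and ene: "e \<noteq> eb"
    using eLU part LE UE ebL ebU by blast+
  define ce where "ce = chi (fcycle I T e)"
  define cb where "cb = chi (fcycle I T eb)"
  have bme: "reduced I (feer I) \<mu> e = bC I T e"
    using bC_red[OF eE eT pot_mu] by (simp add: bC_def)
  have bmb: "reduced I (feer I) \<mu> eb = bC I T eb"
    using bC_red[OF ebE ebT pot_mu] by (simp add: bC_def)
  define \<sigma> where "\<sigma> = pv_sigma L e"
  define k where "k = bC I T e / bC I T eb"
  define th where "th = pv_theta I L T eb \<mu> e"
  have th_eq: "th f = \<sigma> * (ce f - k * cb f)" for f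
    by (simp add: th_def pv_theta_def bme bmb \<sigma>_def k_def ce_def cb_def)
  have ce_e: "ce e = 1" using fc_f[OF eE eT] by (simp add: ce_def)
  have cb_eb: "cb eb = 1" using fc_f[OF ebE ebT] by (simp add: cb_def)
  have ce_eb: "ce eb = 0" using fc_supp[OF eE eT, of eb] ene ebT by (simp add: ce_def)
  have cb_e: "cb e = 0" using fc_supp[OF ebE ebT, of e] ene eT by (simp add: cb_def)
  have th_zero: "th g = 0" if "g \<notin> T" "g \<noteq> e" "g \<noteq> eb" for g
    using fc_supp[OF eE eT, of g] fc_supp[OF ebE ebT, of g] that by (simp add: th_eq ce_def cb_def)
  have th_e: "th e = \<sigma>" using ce_e cb_e by (simp add: th_eq)
  have th_eb: "th eb = - \<sigma> * k" using ce_eb cb_eb by (simp add: th_eq)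
  have sig: "\<sigma> = (if e \<in> L then 1 else -1)" by (simp add: \<sigma>_def pv_sigma_def)
  have th_circ: "circ I th"
  proof -
    have "circ I (\<lambda>f. ce f - k * cb f)" unfolding ce_def cb_def
      by (rule circ_diff[OF fc_circ[OF eE eT] fc_circ[OF ebE ebT]])
    then have "circ I (\<lambda>f. \<sigma> * (ce f - k * cb f))" by (rule circ_scale)
    then show ?thesis by (simp add: th_eq[abs_def])
  qed
  have th_fee: "(\<Sum>g\<in>edges I. real (fee I g) * th g) = 0"
  proof -
    have "(\<Sum>g\<in>edges I. real (fee I g) * th g) =
       \<sigma> * ((\<Sum>g\<in>edges I. real (fee I g) * ce g) - k * (\<Sum>g\<in>edges I. real (fee I g) * cb g))"
      by (simp add: th_eq algebra_simps sum_subtractf sum_distrib_left)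
    also have "\<dots> = \<sigma> * (bC I T e - k * bC I T eb)" by (simp add: bC_def ce_def cb_def)
    also have "\<dots> = 0" using bc by (simp add: k_def)
    finally show ?thesis .
  qed
  define D where "D = pv_deltaf I x th"
  have De: "D e = ereal (real (cap I e))"
    using eLU xL xU sig th_e part(3) by (auto simp: D_def pv_deltaf_def)
  have Dnn: "0 \<le> D f" if "f \<in> edges I" for f using deltaf_nonneg[of x f I th] xb[OF that] by (simp add: D_def)
  have finD: "finite (D ` edges I)" using finE by simp
  have neD: "D ` edges I \<noteq> {}" using eE by blast
  define \<delta> where "\<delta> = pv_delta I x th"
  have \<delta>_eq: "\<delta> = Min (D ` edges I)" by (simp add: \<delta>_def pv_delta_def D_def)
  have \<delta>le: "\<delta> \<le> D f" if "f \<in> edges I" for f using \<delta>_eq finD that by simp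
  have \<delta>nn: "0 \<le> \<delta>" using \<delta>_eq finD neD Dnn by simp
  have \<delta>fin: "\<delta> \<le> ereal (real (cap I e))" using \<delta>le[OF eE] De by simp
  obtain d where dd: "\<delta> = ereal d" using \<delta>nn \<delta>fin by (cases \<delta>) auto
  have d0: "0 \<le> d" using \<delta>nn dd by simp
  have e'E: "e' \<in> edges I" and De': "D e' = ereal d"
    using leaving dd by (auto simp: is_leaving_def Let_def D_def \<delta>_def th_def x_def)
  define x' where "x' = (\<lambda>g. x g + d * th g)"
  have dd': "pv_delta I (basic_sol I L U) (pv_theta I L T eb \<mu> e) = ereal d"
    using dd by (simp add: \<delta>_def x_def th_def)
  have newflow: "pv_newflow I L T U eb \<mu> e = x'"
    by (simp add: pv_newflow_def Let_def x'_def x_def th_def fun_eq_iff dd')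
  have x'b: "0 \<le> x' g \<and> x' g \<le> real (cap I g)" if "g \<in> edges I" for g
    using deltaf_bound[of d I x th g] \<delta>le[OF that] dd d0 xb[OF that] by (simp add: D_def x'_def)
  have x'e': "(th e' < 0 \<and> x' e' = 0) \<or> (th e' > 0 \<and> x' e' = real (cap I e'))"
    using deltaf_eq[of I x th e' d] De' by (simp add: D_def x'_def)
  have the'nz: "th e' \<noteq> 0" using x'e' by auto
  have e'where: "e' = e \<or> e' = eb \<or> e' \<in> T" using the'nz th_zero by blast
  have x'circ: "circ I x'" unfolding x'_def by (rule circ_add[OF basic_circ[OF xs] th_circ])
  have x'fee: "(\<Sum>g\<in>edges I. real (fee I g) * x' g) = real (budget I)"
    using xs th_fee by (simp add: x'_def algebra_simps sum.distrib sum_distrib_left[symmetric] is_basic_sol_def)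
  have x'off: "\<forall>g. g \<notin> edges I \<longrightarrow> x' g = 0"
    using xoff th_zero TE eE ebE by (auto simp: x'_def)
  have x'L: "x' g = 0" if "g \<in> L" "g \<noteq> e" for g
    using xL th_zero that part ebL by (auto simp: x'_def)
  have x'U: "x' g = real (cap I g)" if "g \<in> U" "g \<noteq> e" for g
  proof -
    have "g \<notin> T" "g \<noteq> eb" using that part(4) ebU by auto
    then show ?thesis using xU[OF that(1)] th_zero[of g] that(2) by (simp add: x'_def)
  qed
  have keynz: "ce e' - k * cb e' \<noteq> 0" using the'nz th_eq by auto
  show ?thesis
  proof (cases "e' = e")
    case True
    show ?thesis
    proof (cases "e \<in> L")
      case eL: True
      have x'e: "x' e = real (cap I e)" using x'e' True th_e sig eL by auto
      have bs': "basis_structure I (L - {e}) T (insert e U) eb"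
        using bs eL part unfolding basis_structure_def by blast
      have b': "is_basic_sol I (L - {e}) (insert e U) x'"
        using x'L x'U x'e by (intro mk_basic[OF x'circ _ _ x'fee x'off]) auto
      show ?thesis using finish[OF wf bs' b'] x'b True eL by (simp add: pivot_tuple_def Let_def)
    next
      case eL: False
      then have eU: "e \<in> U" using eLU by blast
      have x'e: "x' e = 0" using x'e' True th_e sig eL by auto
      have bs': "basis_structure I (insert e L) T (U - {e}) eb"
        using bs eU part unfolding basis_structure_def by blast
      have b': "is_basic_sol I (insert e L) (U - {e}) x'"
        using x'L x'U x'e by (intro mk_basic[OF x'circ _ _ x'fee x'off]) auto
      show ?thesis using finish[OF wf bs' b'] x'b True eL by (simp add: pivot_tuple_def Let_def)
    qed
  next
    case ne': False
    show ?thesis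
    proof (cases "e' = eb")
      case True
      have "k \<noteq> 0" using the'nz True th_eb by auto
      then have bce: "bC I T e \<noteq> 0" by (simp add: k_def)
      show ?thesis
      proof (cases "x' eb = 0")
        case x0: True
        have bs': "basis_structure I (insert eb (L - {e})) T (U - {e}) e"
          using eE eLU part ebE st bce unfolding basis_structure_def by blast
        have b': "is_basic_sol I (insert eb (L - {e})) (U - {e}) x'"
          using x'L x'U x0 by (intro mk_basic[OF x'circ _ _ x'fee x'off]) auto
        show ?thesis using finish[OF wf bs' b'] x'b True ne' x0
          by (simp add: pivot_tuple_def Let_def newflow)
      next
        case x0: False
        then have x1: "x' eb = real (cap I eb)" using x'e' True by auto
        have bs': "basis_structure I (L - {e}) T (insert eb (U - {e})) e"
          using eE eLU part ebE st bce unfolding basis_structure_def by blast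
        have b': "is_basic_sol I (L - {e}) (insert eb (U - {e})) x'"
          using x'L x'U x1 by (intro mk_basic[OF x'circ _ _ x'fee x'off]) auto
        show ?thesis using finish[OF wf bs' b'] x'b True ne' x0
          by (simp add: pivot_tuple_def Let_def newflow)
      qed
    next
      case neb: False
      have e'T: "e' \<in> T" using e'where ne' neb by blast
      define L1 where "L1 = (if x' e' = 0 then insert e' (L - {e}) else L - {e})"
      define U1 where "U1 = (if x' e' = 0 then U - {e} else insert e' (U - {e}))"
      have b1: "is_basic_sol I L1 U1 x'"
      proof (rule mk_basic[OF x'circ _ _ x'fee x'off])
        show "\<forall>g\<in>L1. x' g = 0" using x'L by (auto simp: L1_def split: if_splits)
        show "\<forall>g\<in>U1. x' g = real (cap I g)" using x'U x'e' by (auto simp: U1_def split: if_splits)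
      qed
      have L1s: "L1 \<union> U1 = insert e' (L \<union> U - {e})" "L1 \<inter> U1 = {}"
        using part e'T by (auto simp: L1_def U1_def)
      have L1T: "e' \<in> L1 \<union> U1" "e \<notin> L1 \<union> U1" "L1 \<union> U1 \<subseteq> edges I"
        using e'T ne' TE LE UE by (auto simp: L1_def U1_def)
      have tup: "pivot_tuple I L T U eb \<mu> e e' =
         (if spanning_tree I ((T \<union> {e}) - {e'}) then (L1, (T \<union> {e}) - {e'}, U1, eb)
          else (L1, (T \<union> {eb}) - {e'}, U1, e))"
        using ne' neb by (simp add: pivot_tuple_def Let_def newflow L1_def U1_def)
      show ?thesis
      proof (cases "spanning_tree I ((T \<union> {e}) - {e'})")
        case sp: True
        define T2 where "T2 = (T \<union> {e}) - {e'}"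
        have tc2: "tree_ctx I T2" using wf sp by unfold_locales (simp_all add: T2_def)
        have ebT2: "eb \<notin> T2" using ebT ene by (auto simp: T2_def)
        define w where "w = chi (fcycle I T2 eb)"
        have bc2: "bC I T2 eb \<noteq> 0"
        proof
          assume b0: "bC I T2 eb = 0"
          have "w e = 0 \<and> w eb = 0"
          proof (rule key[OF eE eT ebE ebT ene bc e'E])
            show "chi (fcycle I T e) e' - bC I T e / bC I T eb * chi (fcycle I T eb) e' \<noteq> 0"
              using keynz by (simp add: k_def ce_def cb_def)
            show "circ I w" unfolding w_def by (rule tree_ctx.fc_circ[OF tc2 ebE ebT2])
            show "w g = 0" if "g \<in> edges I" "g \<notin> T" "g \<noteq> e" "g \<noteq> eb" for g
              unfolding w_def using tree_ctx.fc_supp[OF tc2 ebE ebT2, of g] that by (simp add: T2_def)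
            show "w e' = 0"
              unfolding w_def using tree_ctx.fc_supp[OF tc2 ebE ebT2, of e'] neb by (simp add: T2_def)
            show "(\<Sum>g\<in>edges I. real (fee I g) * w g) = 0" using b0 by (simp add: bC_def w_def)
          qed
          then show False using tree_ctx.fc_f[OF tc2 ebE ebT2] by (simp add: w_def)
        qed
        have bs': "basis_structure I L1 T2 U1 eb"
          unfolding basis_structure_def
        proof (intro conjI)
          show "eb \<in> edges I" by (rule ebE)
          show "spanning_tree I T2" using sp by (simp add: T2_def)
          show "bC I T2 eb \<noteq> 0" by (rule bc2)
          show "L1 \<union> T2 \<union> U1 = edges I - {eb}"
            using part L1s L1T eE ebE e'T ene ebL ebU eT ebT eLU by (auto simp: T2_def L1_def U1_def split: if_splits)
          show "L1 \<inter> T2 = {}" "L1 \<inter> U1 = {}" "T2 \<inter> U1 = {}"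
            using part L1s L1T e'T by (auto simp: T2_def L1_def U1_def split: if_splits)
        qed
        show ?thesis using finish[OF wf bs' b1] x'b sp tup by (simp add: T2_def)
      next
        case sp: False
        have ce0: "ce e' = 0"
        proof (rule ccontr)
          assume "ce e' \<noteq> 0"
          then have "spanning_tree I (T \<union> {e} - {e'})" using exchange[OF eE eT e'T] by (simp add: ce_def)
          then show False using sp by simp
        qed
        have cbnz: "cb e' \<noteq> 0" using keynz ce0 by auto
        define T3 where "T3 = (T \<union> {eb}) - {e'}"
        have sp3: "spanning_tree I T3" using exchange[OF ebE ebT e'T] cbnz by (simp add: T3_def cb_def)
        have tc3: "tree_ctx I T3" using wf sp3 by unfold_locales
        have eT3: "e \<notin> T3" using eT ene by (auto simp: T3_def)
        define w where "w = chi (fcycle I T3 e)"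
        have bc3: "bC I T3 e \<noteq> 0"
        proof
          assume b0: "bC I T3 e = 0"
          have "w e = 0 \<and> w eb = 0"
          proof (rule key[OF eE eT ebE ebT ene bc e'E])
            show "chi (fcycle I T e) e' - bC I T e / bC I T eb * chi (fcycle I T eb) e' \<noteq> 0"
              using keynz by (simp add: k_def ce_def cb_def)
            show "circ I w" unfolding w_def by (rule tree_ctx.fc_circ[OF tc3 eE eT3])
            show "w g = 0" if "g \<in> edges I" "g \<notin> T" "g \<noteq> e" "g \<noteq> eb" for g
              unfolding w_def using tree_ctx.fc_supp[OF tc3 eE eT3, of g] that by (simp add: T3_def)
            show "w e' = 0"
              unfolding w_def using tree_ctx.fc_supp[OF tc3 eE eT3, of e'] ne' by (simp add: T3_def)
            show "(\<Sum>g\<in>edges I. real (fee I g) * w g) = 0" using b0 by (simp add: bC_def w_def)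
          qed
          then show False using tree_ctx.fc_f[OF tc3 eE eT3] by (simp add: w_def)
        qed
        have bs': "basis_structure I L1 T3 U1 e"
          unfolding basis_structure_def
        proof (intro conjI)
          show "e \<in> edges I" by (rule eE)
          show "spanning_tree I T3" by (rule sp3)
          show "bC I T3 e \<noteq> 0" by (rule bc3)
          show "L1 \<union> T3 \<union> U1 = edges I - {e}"
            using part L1s L1T eE ebE e'T ene eLU by (auto simp: T3_def L1_def U1_def split: if_splits)
          show "L1 \<inter> T3 = {}" "L1 \<inter> U1 = {}" "T3 \<inter> U1 = {}"
            using part L1s L1T e'T ebL ebU by (auto simp: T3_def L1_def U1_def split: if_splits)
        qed
        show ?thesis using finish[OF wf bs' b1] x'b sp tup by (simp add: T3_def)
      qed
    qed
  qed
qed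

end
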